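(* For all $\phi,\psi,\chi\in\mathcal{L}(\boxdot)$, the formula $\phi\to\boxdot((\boxdot\phi\wedge\boxdot(\phi\to\psi)\wedge\neg\boxdot\psi)\to\chi)$ is valid on the class of symmetric bimodal frames (both $R_1$ and $R_2$ symmetric).
   Context: Fix a nonempty set $\mathbf{P}$ of propositional variables. A bimodal model is $\langle S,R_1,R_2,V\rangle$ with $S$ nonempty, $R_1,R_2\subseteq S\times S$, $V:\mathbf{P}\to\mathcal{P}(S)$. $\mathcal{L}(\boxdot):\ \phi::=p\mid\neg\phi\mid(\phi\wedge\phi)\mid\boxdot\phi$. Truth: $\mathcal{M},s\vDash\boxdot\phi$ iff for all $t,u$ with $sR_1t$ and $sR_2u$, ($\mathcal{M},t\vDash\phi\iff\mathcal{M},u\vDash\phi$); atoms and Booleans as usual. Valid on a class of frames means true at every state of every model based on a frame of the class. *)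

theory Defs
  imports Main
begin

datatype 'p fm = Atom 'p | Neg "'p fm" | Conj "'p fm" "'p fm" | Dot "'p fm"

definition Imp :: "'p fm \<Rightarrow> 'p fm \<Rightarrow> 'p fm" where
  "Imp a b = Neg (Conj a (Neg b))"

record ('s,'p) bimodel =
  St :: "'s set"
  R1 :: "('s \<times> 's) set"
  R2 :: "('s \<times> 's) set"
  Val :: "'p \<Rightarrow> 's set"

definition is_model :: "('s,'p) bimodel \<Rightarrow> bool" where
  "is_model M \<longleftrightarrow> St M \<noteq> {} \<and> R1 M \<subseteq> St M \<times> St M \<and> R2 M \<subseteq> St M \<times> St M
     \<and> (\<forall>p. Val M p \<subseteq> St M)"

fun sat :: "('s,'p) bimodel \<Rightarrow> 's \<Rightarrow> 'p fm \<Rightarrow> bool" where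
  "sat M s (Atom p) = (s \<in> Val M p)"
| "sat M s (Neg a) = (\<not> sat M s a)"
| "sat M s (Conj a b) = (sat M s a \<and> sat M s b)"
| "sat M s (Dot a) = (\<forall>t u. (s,t) \<in> R1 M \<longrightarrow> (s,u) \<in> R2 M \<longrightarrow> (sat M t a \<longleftrightarrow> sat M u a))"

definition symmetric_frame :: "('s,'p) bimodel \<Rightarrow> bool" where
  "symmetric_frame M \<longleftrightarrow> sym (R1 M) \<and> sym (R2 M)"

definition valid_in :: "('s,'p) bimodel \<Rightarrow> 'p fm \<Rightarrow> bool" where
  "valid_in M \<phi> \<longleftrightarrow> (\<forall>s\<in>St M. sat M s \<phi>)"

end

theory Submission
  imports Defs
begin

lemma key:
  assumes "sat M s \<phi>" "(t,s) \<in> R1 M \<or> (t,s) \<in> R2 M"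
  shows "\<not> sat M t (Conj (Conj (Dot \<phi>) (Dot (Imp \<phi> \<psi>))) (Neg (Dot \<psi>)))"
  using assms unfolding Imp_def by simp metis

theorem mainTheorem13:
  fixes M :: "('s,'p) bimodel" and \<phi> \<psi> \<chi> :: "'p fm"
  assumes "is_model M" and "symmetric_frame M"
  shows "valid_in M (Imp \<phi> (Dot (Imp (Conj (Conj (Dot \<phi>) (Dot (Imp \<phi> \<psi>))) (Neg (Dot \<psi>))) \<chi>)))"
proof -
  have s1: "sym (R1 M)" and s2: "sym (R2 M)" using assms(2) by (auto simp: symmetric_frame_def)
  show ?thesis unfolding valid_in_def
  proof
    fix s assume "s \<in> St M"
    show "sat M s (Imp \<phi> (Dot (Imp (Conj (Conj (Dot \<phi>) (Dot (Imp \<phi> \<psi>))) (Neg (Dot \<psi>))) \<chi>)))"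
    proof (cases "sat M s \<phi>")
      case True
      have "\<And>t. (s,t) \<in> R1 M \<Longrightarrow> \<not> sat M t (Conj (Conj (Dot \<phi>) (Dot (Imp \<phi> \<psi>))) (Neg (Dot \<psi>)))"
        using key[OF True] s1 by (meson symD)
      moreover have "\<And>t. (s,t) \<in> R2 M \<Longrightarrow> \<not> sat M t (Conj (Conj (Dot \<phi>) (Dot (Imp \<phi> \<psi>))) (Neg (Dot \<psi>)))"
        using key[OF True] s2 by (meson symD)
      ultimately have "\<And>t u. (s,t) \<in> R1 M \<Longrightarrow> (s,u) \<in> R2 M \<Longrightarrow>
          sat M t (Imp (Conj (Conj (Dot \<phi>) (Dot (Imp \<phi> \<psi>))) (Neg (Dot \<psi>))) \<chi>) \<and>
          sat M u (Imp (Conj (Conj (Dot \<phi>) (Dot (Imp \<phi> \<psi>))) (Neg (Dot \<psi>))) \<chi>)"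
        by (metis Imp_def sat.simps(2,3))
      then show ?thesis using True by (simp only: Imp_def[of \<phi>] sat.simps) blast
    qed (simp add: Imp_def)
  qed
qed

end
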